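(* Let $A^{(n)}_k$ be Knuth's Faulhaber coefficients, defined by $$\sum_{n\ge1}\sum_{k=0}^{n-1}\frac{x^{2n}}{(2n)!}A^{(n)}_k y^{k}=\left(\frac{x\sqrt y}{2}\right)\frac{\cosh\!\left(\tfrac12 x\sqrt{y+4}\right)-\cosh\!\left(\tfrac12 x\sqrt y\right)}{\sinh\!\left(\tfrac12 x\sqrt y\right)},$$ and for $n\ge k\ge2$ let $b(n,k)=(-1)^{n-k}A^{(n)}_{n-k}\frac{(k!)^2}{(2k+1)!}$. Then for all $n>2$ and $2\le k\le n-1$, $$b(n,k)>2\,b(n,k+1)\quad\text{and}\quad b(n,k)>\sum_{l=k+1}^{n}b(n,l),$$ and $b(n,k)>0$ for all $n\ge k\ge2$. *)

theory Defs
  imports "HOL-Computational_Algebra.Formal_Power_Series"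
begin

(* Bivariate formal power series: outer variable x, inner variable y (type real fps fps). *)

(* cosh(x * sqrt(q) / 2) = sum_m (q/4)^m x^(2m) / (2m)! *)
definition cosh_half :: "real fps \<Rightarrow> real fps fps" where
  "cosh_half q = Abs_fps (\<lambda>n. if even n
      then fps_const (1 / fact n) * (fps_const (1/4) * q) ^ (n div 2) else 0)"

(* sinh(z)/z at z = x * sqrt(q) / 2, i.e. sum_m (q/4)^m x^(2m) / (2m+1)! *)
definition sinhc_half :: "real fps \<Rightarrow> real fps fps" where
  "sinhc_half q = Abs_fps (\<lambda>n. if even n
      then fps_const (1 / fact (n + 1)) * (fps_const (1/4) * q) ^ (n div 2) else 0)"

(* Right-hand side of Knuth's generating function:
   (x sqrt y / 2) (cosh(x sqrt(y+4)/2) - cosh(x sqrt y / 2)) / sinh(x sqrt y / 2) *)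
definition knuth_gf :: "real fps fps" where
  "knuth_gf = inverse (sinhc_half fps_X)
      * (cosh_half (fps_X + 4) - cosh_half fps_X)"

definition knuthA :: "nat \<Rightarrow> nat \<Rightarrow> real" where
  "knuthA n k = fact (2 * n) * fps_nth (fps_nth knuth_gf (2 * n)) k"

definition bnk :: "nat \<Rightarrow> nat \<Rightarrow> real" where
  "bnk n k = (-1) ^ (n - k) * knuthA n (n - k) * (fact k)^2 / fact (2 * k + 1)"

end

theory Submission
  imports Defs
begin
unbundle fps_syntax

lemma even_mult_nth:
  fixes f g :: "'b::comm_ring_1 fps"
  assumes hf: "\<And>i. f $ i = (if even i then F (i div 2) else 0)"
      and hg: "\<And>i. g $ i = (if even i then G (i div 2) else 0)"
  shows "(f*g) $ (2*p) = (\<Sum>j=0..p. F j * G (p-j))"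
    and "(f*g) $ (Suc(2*p)) = 0"
proof -
  let ?h = "\<lambda>i. f $ i * g $ (2*p-i)"
  have "(f*g) $ (2*p) = (\<Sum>i=0..2*p. ?h i)" by (simp add: fps_mult_nth)
  also have "\<dots> = (\<Sum>i\<in>(\<lambda>j. 2*j) ` {0..p}. ?h i)"
  proof (rule sum.mono_neutral_right)
    show "(\<lambda>j. 2*j) ` {0..p} \<subseteq> {0..2*p}" by auto
    show "\<forall>i\<in>{0..2*p} - (\<lambda>j. 2*j) ` {0..p}. ?h i = 0"
    proof
      fix i assume "i \<in> {0..2*p} - (\<lambda>j. 2*j) ` {0..p}"
      then have "odd i" by (auto elim!: evenE)
      then show "?h i = 0" by (simp add: hf)
    qed
  qed simp
  also have "\<dots> = (\<Sum>j=0..p. ?h (2*j))"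
    by (subst sum.reindex) (auto simp: inj_on_def)
  also have "\<dots> = (\<Sum>j=0..p. F j * G (p-j))"
  proof (rule sum.cong)
    fix j assume "j \<in> {0..p}"
    then have "2*p - 2*j = 2*(p-j)" by auto
    then show "?h (2*j) = F j * G (p-j)" by (simp add: hf hg)
  qed simp
  finally show "(f*g) $ (2*p) = (\<Sum>j=0..p. F j * G (p-j))" .
  have "(f*g) $ (Suc(2*p)) = (\<Sum>i=0..Suc(2*p). f $ i * g $ (Suc(2*p)-i))" by (simp add: fps_mult_nth)
  also have "\<dots> = 0"
  proof (rule sum.neutral, rule ballI)
    fix i assume "i \<in> {0..Suc(2*p)}"
    then show "f $ i * g $ (Suc(2*p)-i) = 0"
      by (cases "even i") (auto simp: hf hg)
  qed
  finally show "(f*g) $ (Suc(2*p)) = 0" .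
qed

lemma fps_const_sum': "fps_const (sum f A) = (\<Sum>k\<in>A. fps_const (f k))"
  by (rule fps_ext) (simp add: fps_sum_nth)

definition dd :: "nat \<Rightarrow> real" where "dd j = 1 / fact (2*j+1)"
definition cc :: "nat \<Rightarrow> real" where "cc = fps_nth (inverse (Abs_fps dd))"

lemma cc_conv: "(\<Sum>j=0..p. dd j * cc (p-j)) = (if p = 0 then 1 else 0)"
proof -
  have "Abs_fps dd * inverse (Abs_fps dd) = 1"
    by (rule inverse_mult_eq_1') (simp add: dd_def)
  then have "(Abs_fps dd * inverse (Abs_fps dd)) $ p = (1::real fps) $ p" by simp
  then show ?thesis by (simp add: fps_mult_nth cc_def)
qed

lemma cc0: "cc 0 = 1"
  using cc_conv[of 0] by (simp add: dd_def)

definition TT :: "real fps fps" where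
  "TT = Abs_fps (\<lambda>n. if even n then fps_const (cc (n div 2)) * (fps_const (1/4) * fps_X) ^ (n div 2) else 0)"

lemma S_TT: "sinhc_half fps_X * TT = 1"
proof (rule fps_ext)
  fix n
  let ?Q = "fps_const (1/4) * (fps_X :: real fps)"
  have hf: "\<And>i. sinhc_half fps_X $ i = (if even i then (\<lambda>j. fps_const (dd j) * ?Q ^ j) (i div 2) else 0)"
    by (simp add: sinhc_half_def dd_def)
  have hg: "\<And>i. TT $ i = (if even i then (\<lambda>j. fps_const (cc j) * ?Q ^ j) (i div 2) else 0)"
    by (simp add: TT_def)
  show "(sinhc_half fps_X * TT) $ n = 1 $ n"
  proof (cases "even n")
    case True
    then obtain p where p: "n = 2*p" by (auto elim: evenE)
    have "(sinhc_half fps_X * TT) $ n = (\<Sum>j=0..p. fps_const (dd j) * ?Q ^ j * (fps_const (cc (p-j)) * ?Q ^ (p-j)))"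
      unfolding p by (rule even_mult_nth(1)[OF hf hg])
    also have "\<dots> = (\<Sum>j=0..p. fps_const (dd j * cc (p-j)) * ?Q ^ p)"
    proof (rule sum.cong)
      fix j assume "j \<in> {0..p}"
      then have "?Q ^ j * ?Q ^ (p-j) = ?Q ^ p" by (simp add: power_add[symmetric])
      then show "fps_const (dd j) * ?Q ^ j * (fps_const (cc (p-j)) * ?Q ^ (p-j)) = fps_const (dd j * cc (p-j)) * ?Q ^ p"
        by (simp add: fps_const_mult[symmetric] algebra_simps del: fps_const_mult)
    qed simp
    also have "\<dots> = fps_const (\<Sum>j=0..p. dd j * cc (p-j)) * ?Q ^ p"
      by (simp add: sum_distrib_right fps_const_sum')
    also have "\<dots> = 1 $ n" using p cc_conv[of p] by simp
    finally show ?thesis .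
  next
    case False
    then obtain p where p: "n = Suc (2*p)" by (metis oddE Suc_eq_plus1)
    show ?thesis unfolding p by (simp add: even_mult_nth(2)[OF hf hg])
  qed
qed

lemma inv_S: "inverse (sinhc_half fps_X) = TT"
proof -
  have s0: "sinhc_half fps_X $ 0 = 1" by (simp add: sinhc_half_def)
  have t0: "TT $ 0 = 1" by (simp add: TT_def cc0)
  have "fps_right_inverse (sinhc_half fps_X) (TT $ 0) = TT"
    by (rule fps_lr_inverse_unique_ring1(2)) (simp_all add: S_TT s0 t0)
  moreover have "inverse (sinhc_half fps_X) = fps_right_inverse (sinhc_half fps_X) (inverse (sinhc_half fps_X $ 0))"
    by (rule fps_inverse_def)
  moreover have "inverse (sinhc_half fps_X $ 0) = 1" by (simp add: s0)
  ultimately show ?thesis by (simp add: t0)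
qed


lemma X4_pow_nth: "((fps_X + 4)^m :: real fps) $ i = real (m choose i) * 4^(m-i)"
proof -
  have "(fps_X + 4 :: real fps)^m = (\<Sum>k\<le>m. of_nat (m choose k) * fps_X^k * 4^(m-k))"
    by (rule binomial_ring)
  also have "\<dots> = (\<Sum>k\<le>m. fps_const (real (m choose k) * 4^(m-k)) * fps_X^k)"
    by (rule sum.cong) (simp_all add: fps_of_nat fps_numeral_fps_const fps_const_mult[symmetric] mult_ac del: fps_const_mult)
  finally have e: "(fps_X + 4 :: real fps)^m = \<dots>" .
  have "(\<Sum>k\<le>m. (fps_const (real (m choose k) * 4^(m-k)) * fps_X^k) $ i)
      = (\<Sum>k\<le>m. if k = i then real (m choose k) * 4^(m-k) else 0)"
    by (rule sum.cong) (auto simp: fps_X_power_nth)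
  also have "\<dots> = real (m choose i) * 4^(m-i)"
    by (cases "i \<le> m") (auto simp: binomial_eq_0)
  finally show ?thesis unfolding e fps_sum_nth .
qed

lemma const_shuffle:
  fixes x y :: "real fps"
  shows "fps_const c * (fps_const a * x)^j * (fps_const f * ((fps_const a * y)^m - (fps_const a * x)^m))
     = x^j * (fps_const (c * a^j * f * a^m) * (y^m - x^m))"
proof -
  have "fps_const c * (fps_const a * x)^j * (fps_const f * ((fps_const a * y)^m - (fps_const a * x)^m))
     = fps_const c * (fps_const (a^j) * x^j) * (fps_const f * (fps_const (a^m) * y^m - fps_const (a^m) * x^m))"
    by (simp only: power_mult_distrib fps_const_power)
  also have "\<dots> = x^j * ((fps_const c * fps_const (a^j) * fps_const f * fps_const (a^m)) * (y^m - x^m))"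
    by (simp only: algebra_simps)
  also have "\<dots> = x^j * (fps_const (c * a^j * f * a^m) * (y^m - x^m))"
    by (simp only: fps_const_mult)
  finally show ?thesis .
qed

definition PP :: "nat \<Rightarrow> nat \<Rightarrow> real" where
  "PP n k = (\<Sum>i=0..n. real (i choose k) * cc (n-i) / fact (2*i))"

lemma gf_even: "knuth_gf $ (2*n) = (\<Sum>j=0..n. fps_const (cc j) * (fps_const (1/4) * fps_X)^j *
     (fps_const (1/fact (2*(n-j))) * ((fps_const (1/4) * (fps_X + 4))^(n-j) - (fps_const (1/4) * fps_X)^(n-j))))"
proof -
  let ?Q = "fps_const (1/4) * (fps_X :: real fps)"
  let ?Q4 = "fps_const (1/4) * (fps_X + 4 :: real fps)"
  have hf: "\<And>i. TT $ i = (if even i then (\<lambda>j. fps_const (cc j) * ?Q ^ j) (i div 2) else 0)"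
    by (simp add: TT_def)
  have hg: "\<And>i. (cosh_half (fps_X + 4) - cosh_half fps_X) $ i = (if even i then
      (\<lambda>m. fps_const (1/fact (2*m)) * (?Q4^m - ?Q^m)) (i div 2) else 0)"
    by (auto simp: cosh_half_def algebra_simps elim!: evenE)
  show ?thesis
    unfolding knuth_gf_def inv_S by (rule even_mult_nth(1)[OF hf hg])
qed

lemma gf_coeff:
  assumes "q < n"
  shows "(knuth_gf $ (2*n)) $ q = (\<Sum>j=0..n. (if j \<le> q then cc j / fact (2*(n-j)) * (1/4)^n * real ((n-j) choose (q-j)) * 4^(n-q) else 0))"
proof -
  have "(knuth_gf $ (2*n)) $ q = (\<Sum>j=0..n. (fps_const (cc j) * (fps_const (1/4) * fps_X)^j *
     (fps_const (1/fact (2*(n-j))) * ((fps_const (1/4) * (fps_X + 4))^(n-j) - (fps_const (1/4) * fps_X)^(n-j)))) $ q)"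
    unfolding gf_even fps_sum_nth ..
  also have "\<dots> = (\<Sum>j=0..n. (if j \<le> q then cc j / fact (2*(n-j)) * (1/4)^n * real ((n-j) choose (q-j)) * 4^(n-q) else 0))"
  proof (rule sum.cong)
    fix j assume j: "j \<in> {0..n}"
    let ?m = "n - j"
    have eq: "fps_const (cc j) * (fps_const (1/4) * fps_X)^j *
     (fps_const (1/fact (2*(n-j))) * ((fps_const (1/4) * (fps_X + 4))^(n-j) - (fps_const (1/4) * fps_X)^(n-j)))
      = fps_X^j * (fps_const (cc j * (1/4)^j * (1/fact (2*?m)) * (1/4)^?m) * ((fps_X + 4)^?m - fps_X^?m))"
      by (rule const_shuffle)
    show "(fps_const (cc j) * (fps_const (1/4) * fps_X)^j *
     (fps_const (1/fact (2*(n-j))) * ((fps_const (1/4) * (fps_X + 4))^(n-j) - (fps_const (1/4) * fps_X)^(n-j)))) $ q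
      = (if j \<le> q then cc j / fact (2*(n-j)) * (1/4)^n * real ((n-j) choose (q-j)) * 4^(n-q) else 0)"
    proof (cases "j \<le> q")
      case True
      have n: "n = j + ?m" using j by auto
      have m: "?m - (q - j) = n - q" using True assms by auto
      have "(1/4::real)^j * (1/4)^?m = (1/4)^n" by (subst n) (simp add: power_add)
      moreover have "q - j \<noteq> ?m" using True assms by auto
      ultimately show ?thesis using True
        unfolding eq fps_X_power_mult_nth
        by (simp add: X4_pow_nth m fps_X_power_nth)
    next
      case False
      then show ?thesis unfolding eq fps_X_power_mult_nth by simp
    qed
  qed simp
  finally show ?thesis .
qed


lemma knuthA_PP:
  assumes "1 \<le> k" "k \<le> n"
  shows "knuthA n (n-k) = fact (2*n) * 4^k / 4^n * PP n k"
proof -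
  have q: "n - k < n" using assms by auto
  have "(knuth_gf $ (2*n)) $ (n-k) = (\<Sum>j=0..n. (1/4)^n * 4^k * (real ((n-j) choose k) * cc j / fact (2*(n-j))))"
    unfolding gf_coeff[OF q]
  proof (rule sum.cong)
    fix j assume "j \<in> {0..n}"
    show "(if j \<le> n-k then cc j / fact (2*(n-j)) * (1/4)^n * real ((n-j) choose (n-k-j)) * 4^(n-(n-k)) else 0)
       = (1/4)^n * 4^k * (real ((n-j) choose k) * cc j / fact (2*(n-j)))"
    proof (cases "j \<le> n-k")
      case True
      then have "(n-j) choose (n-k-j) = (n-j) choose k"
        using binomial_symmetric[of k "n-j"] assms by (simp add: diff_diff_eq add.commute)
      then show ?thesis using True assms by simp
    next
      case False
      then have "(n-j) choose k = 0" using assms by (simp add: binomial_eq_0)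
      then show ?thesis using False by simp
    qed
  qed simp
  also have "\<dots> = (1/4)^n * 4^k * (\<Sum>j=0..n. real ((n-j) choose k) * cc j / fact (2*(n-j)))"
    by (simp add: sum_distrib_left)
  also have "(\<Sum>j=0..n. real ((n-j) choose k) * cc j / fact (2*(n-j))) = PP n k"
    unfolding PP_def using sum.atLeastAtMost_rev[of "\<lambda>j. real ((n-j) choose k) * cc j / fact (2*(n-j))" 0 n]
    by simp
  finally show ?thesis unfolding knuthA_def by (simp add: power_one_over field_simps)
qed


lemma binom_step:
  "4 * real (Suc k) * real (k+2) * real (Suc i choose (k+2)) + real (Suc k) * (4 * real k + 2) * real (Suc i choose Suc k)
    = 2 * (2 * real i + 1) * real (Suc i) * real (i choose k)"
proof -
  define A where "A = real (i choose k)"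
  define B where "B = real (i choose Suc k)"
  have h1: "real (Suc k) * real (Suc i choose Suc k) = real (Suc i) * A"
    unfolding A_def using Suc_times_binomial_eq[of i k] by (metis mult.commute of_nat_mult)
  have h2: "real (k+2) * real (Suc i choose (k+2)) = real (Suc i) * B"
    unfolding B_def using Suc_times_binomial_eq[of i "Suc k"]
    by (metis add_2_eq_Suc' mult.commute of_nat_mult)
  have h3: "real (Suc i choose Suc k) = A + B" unfolding A_def B_def by simp
  have h13: "real (Suc k) * (A + B) = real (Suc i) * A"
    using h1 unfolding h3 .
  have h4: "real (Suc k) * B = real (Suc i) * A - real (Suc k) * A"
    using h13 by (simp add: algebra_simps)
  have "4 * real (Suc k) * real (k+2) * real (Suc i choose (k+2)) = 4 * real (Suc k) * (real (k+2) * real (Suc i choose (k+2)))"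
    by (simp only: mult.assoc)
  also have "\<dots> = 4 * real (Suc k) * (real (Suc i) * B)" by (simp only: h2)
  also have "\<dots> = 4 * real (Suc i) * (real (Suc k) * B)" by (simp only: mult_ac)
  also have "\<dots> = 4 * real (Suc i) * (real (Suc i) * A - real (Suc k) * A)" using h4 by simp
  finally have e1: "4 * real (Suc k) * real (k+2) * real (Suc i choose (k+2)) = 4 * real (Suc i) * (real (Suc i) * A - real (Suc k) * A)" .
  have "real (Suc k) * (4 * real k + 2) * real (Suc i choose Suc k) = (4 * real k + 2) * (real (Suc k) * real (Suc i choose Suc k))"
    by (simp only: mult_ac)
  then have e2: "real (Suc k) * (4 * real k + 2) * real (Suc i choose Suc k) = (4 * real k + 2) * (real (Suc i) * A)"
    by (simp only: h1)
  show ?thesis unfolding e1 e2 A_def[symmetric] by (simp add: algebra_simps)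
qed

lemma PP_rec:
  "PP m k = 4 * real (Suc k) * real (k+2) * PP (Suc m) (k+2) + real (Suc k) * (4 * real k + 2) * PP (Suc m) (Suc k)"
proof -
  define f where "f i = cc (Suc m - i) / fact (2*i) *
     (4 * real (Suc k) * real (k+2) * real (i choose (k+2)) + real (Suc k) * (4 * real k + 2) * real (i choose Suc k))" for i
  have "4 * real (Suc k) * real (k+2) * PP (Suc m) (k+2) + real (Suc k) * (4 * real k + 2) * PP (Suc m) (Suc k)
      = (\<Sum>i=0..Suc m. 4 * real (Suc k) * real (k+2) * (real (i choose (k+2)) * cc (Suc m - i) / fact (2*i))
           + real (Suc k) * (4 * real k + 2) * (real (i choose Suc k) * cc (Suc m - i) / fact (2*i)))"
    by (simp only: PP_def sum_distrib_left sum.distrib)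
  also have "\<dots> = (\<Sum>i=0..Suc m. f i)"
    by (rule sum.cong) (simp_all add: f_def field_simps)
  also have "\<dots> = f 0 + (\<Sum>i=0..m. f (Suc i))"
    by (simp only: sum.atLeast0_atMost_Suc_shift comp_def)
  also have "f 0 = 0" by (simp add: f_def)
  also have "(\<Sum>i=0..m. f (Suc i)) = PP m k"
    unfolding PP_def
  proof (rule sum.cong)
    fix i assume "i \<in> {0..m}"
    have fs: "fact (2 * Suc i) = (2 * (2 * real i + 1) * real (Suc i)) * (fact (2*i) :: real)"
      by (simp add: algebra_simps)
    have P: "2 * (2 * real i + 1) * real (Suc i) \<noteq> 0" by simp
    have gen: "\<And>P D x y::real. P \<noteq> 0 \<Longrightarrow> x / (P * D) * (P * y) = y * x / D"
      by (simp add: field_simps)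
    have "f (Suc i) = cc (m - i) / fact (2 * Suc i) * (2 * (2 * real i + 1) * real (Suc i) * real (i choose k))"
      unfolding f_def binom_step by simp
    also have "\<dots> = real (i choose k) * cc (m - i) / fact (2 * i)"
      unfolding fs by (rule gen[OF P])
    finally show "f (Suc i) = real (i choose k) * cc (m - i) / fact (2 * i)" .
  qed simp
  finally show ?thesis by simp
qed


definition beta :: "nat \<Rightarrow> real" where "beta k = (fact k)^2 / fact (2*k+1)"

definition bb :: "nat \<Rightarrow> nat \<Rightarrow> real" where
  "bb n k = (-1)^(n+k) * fact (2*n) * 4^k / 4^n * PP n k * beta k"

lemma beta_pos: "beta k > 0" by (simp add: beta_def)

lemma beta_Suc: "beta (Suc k) = beta k * (real k + 1) / (2 * (2 * real k + 3))"
proof -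
  have a: "(fact (Suc k) :: real)^2 = (real k + 1) * (real k + 1) * (fact k)^2"
    by (simp add: power2_eq_square algebra_simps)
  have b: "(fact (2 * Suc k + 1) :: real) = (2 * real k + 3) * (2 * real k + 2) * fact (2*k+1)"
    by (simp add: algebra_simps)
  have g1: "\<And>x f g :: real. x \<ge> 0 \<Longrightarrow> g > 0 \<Longrightarrow>
     (x+1)*(x+1)*f/((2*x+3)*(2*x+2)*g) = f/g*(x+1)/(2*(2*x+3))"
  proof -
    fix x f g :: real assume as: "x \<ge> 0" "g > 0"
    have "2*x+3 \<noteq> 0" "2*x+2 \<noteq> 0" "g \<noteq> 0" "x+1 \<noteq> 0" using as by auto
    then show "(x+1)*(x+1)*f/((2*x+3)*(2*x+2)*g) = f/g*(x+1)/(2*(2*x+3))"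
      by (simp add: divide_simps) (simp add: algebra_simps)
  qed
  show ?thesis unfolding beta_def a b by (rule g1) simp_all
qed

lemma rec_identity:
  fixes s F p b X1 X2 x y :: real
  assumes "x \<ge> 0" "y \<ge> 0"
  shows "(2*x+1) * (s*((2*y+2)*(2*y+1)*F)*p*X1*(b*(x+1)/(2*(2*x+3))))
   = (2*x+5) * (-s*((2*y+2)*(2*y+1)*F)*(4*p)*X2*(b*(x+1)/(2*(2*x+3))*(x+2)/(2*(2*x+5))))
     + (1+y)*(2*(1+y)-1)/(2*(2*x+3)) * (s*F*p*(4*(x+1)*(x+2)*X2 + (x+1)*(4*x+2)*X1)*b)"
proof -
  have a: "2*x+3 \<noteq> 0" "2*x+5 \<noteq> 0" using assms by auto
  show ?thesis using a by (simp add: divide_simps) (simp add: algebra_simps)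
qed

lemma bb_alt: "bb n k = (-1)^(n+k) * fact (2*n) * (4^k / 4^n) * PP n k * beta k"
  by (simp add: bb_def)

lemma bb_rec:
  "(2*real i+1) * bb (Suc m) (Suc i) = (2*real i+5) * bb (Suc m) (Suc (Suc i))
     + real (Suc m) * (2*real (Suc m) - 1) / (2*(2*real i+3)) * bb m i"
proof -
  define s where "s = ((-1)^(m+i) :: real)"
  define F where "F = (fact (2*m) :: real)"
  define p where "p = (4^i / 4^m :: real)"
  have fS: "(fact (2 * Suc m) :: real) = (2*real m+2)*(2*real m+1)*F"
    unfolding F_def by (simp add: algebra_simps)
  have s1: "((-1)^(Suc m + Suc i) :: real) = s" by (simp add: s_def)
  have s2: "((-1)^(Suc m + Suc (Suc i)) :: real) = -s" by (simp add: s_def)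
  have p1: "(4^(Suc i) / 4^(Suc m) :: real) = p" by (simp add: p_def)
  have p2: "(4^(Suc (Suc i)) / 4^(Suc m) :: real) = 4*p" by (simp add: p_def)
  have b2: "beta (Suc (Suc i)) = beta i*(real i+1)/(2*(2*real i+3))*(real i+2)/(2*(2*real i+5))"
    unfolding beta_Suc by (simp add: algebra_simps)
  have e1: "bb (Suc m) (Suc i) = s*((2*real m+2)*(2*real m+1)*F)*p*PP (Suc m) (Suc i)*(beta i*(real i+1)/(2*(2*real i+3)))"
    unfolding bb_alt fS s1 p1 beta_Suc ..
  have e2: "bb (Suc m) (Suc (Suc i)) = -s*((2*real m+2)*(2*real m+1)*F)*(4*p)*PP (Suc m) (Suc (Suc i))*(beta i*(real i+1)/(2*(2*real i+3))*(real i+2)/(2*(2*real i+5)))"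
    unfolding bb_alt fS s2 p2 b2 ..
  have e3: "bb m i = s*F*p*(4*(real i+1)*(real i+2)*PP (Suc m) (Suc (Suc i)) + (real i+1)*(4*real i+2)*PP (Suc m) (Suc i))*beta i"
    unfolding bb_alt s_def[symmetric] F_def[symmetric] p_def[symmetric] PP_rec[of m i] by (simp add: algebra_simps)
  show ?thesis unfolding e1 e2 e3 of_nat_Suc
    by (rule rec_identity) simp_all
qed


lemma bnk_bb:
  assumes "1 \<le> k" "k \<le> n"
  shows "bnk n k = bb n k"
proof -
  have e: "n + k = (n - k) + 2 * k" using assms by auto
  have "((-1::real)^(n+k)) = (-1)^((n - k) + 2 * k)" by (simp only: e)
  also have "\<dots> = (-1)^(n-k)" by (simp only: power_add power_mult) simp
  finally have "((-1::real)^(n+k)) = (-1)^(n-k)" .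
  then show ?thesis
    unfolding bnk_def knuthA_PP[OF assms] bb_def beta_def by simp
qed

lemma PP_above: "PP n (Suc n) = 0"
  unfolding PP_def by (rule sum.neutral) (auto simp: binomial_eq_0)

lemma bb_above: "bb n (Suc n) = 0"
  by (simp add: bb_def PP_above)

lemma PP_diag: "PP n n = 1 / fact (2*n)"
proof -
  have "PP n n = (\<Sum>i=0..n. if i = n then cc 0 / fact (2*n) else 0)"
    unfolding PP_def by (rule sum.cong) (auto simp: binomial_eq_0)
  then show ?thesis by (simp add: cc0)
qed

lemma bb_diag: "bb n n > 0"
proof -
  have "((-1::real)^(n+n)) = 1" by (simp add: mult_2[symmetric] power_mult)
  then show ?thesis by (simp add: bb_def PP_diag beta_pos)
qed

lemma PP_one: "PP (Suc p) 1 = (\<Sum>i=0..p. dd i * cc (p-i)) / 2"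
proof -
  have "PP (Suc p) 1 = (\<Sum>i=0..Suc p. real i * cc (Suc p - i) / fact (2*i))"
    by (simp add: PP_def)
  also have "\<dots> = 0 + (\<Sum>i=0..p. real (Suc i) * cc (Suc p - Suc i) / fact (2*Suc i))"
    by (simp only: sum.atLeast0_atMost_Suc_shift comp_def) (simp)?
  also have "\<dots> = (\<Sum>i=0..p. real (Suc i) * cc (Suc p - Suc i) / fact (2*Suc i))"
    by (simp only: add_0_left)
  also have "\<dots> = (\<Sum>i=0..p. dd i * cc (p-i) / 2)"
  proof (rule sum.cong)
    fix i assume "i \<in> {0..p}"
    have fS: "(fact (2 * Suc i) :: real) = (2 * real (Suc i)) * fact (2*i+1)"
      by (simp add: algebra_simps)
    have gen: "\<And>a c G::real. a \<noteq> 0 \<Longrightarrow> G \<noteq> 0 \<Longrightarrow> a*c/((2*a)*G) = 1/G * c/2"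
      by (simp add: divide_simps)
    have "real (Suc i) * cc (Suc p - Suc i) / fact (2*Suc i) = real (Suc i) * cc (p-i) / ((2*real (Suc i)) * fact (2*i+1))"
      by (simp only: fS diff_Suc_Suc)
    also have "\<dots> = 1 / fact (2*i+1) * cc (p-i) / 2" by (rule gen) auto
    finally show "real (Suc i) * cc (Suc p - Suc i) / fact (2*Suc i) = dd i * cc (p-i) / 2"
      unfolding dd_def .
  qed (simp)
  also have "\<dots> = (\<Sum>i=0..p. dd i * cc (p-i)) / 2" by (simp add: sum_divide_distrib)
  finally show ?thesis .
qed

lemma bb_one: "n \<ge> 2 \<Longrightarrow> bb n 1 = 0"
proof -
  assume "n \<ge> 2"
  then obtain p where p: "n = Suc p" "p \<ge> 1" by (cases n) auto
  then have "PP n 1 = 0" using PP_one[of p] cc_conv[of p] by simp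
  then show ?thesis by (simp add: bb_def)
qed


lemma key_ineq:
  fixes B1 B2 R R' x K :: real
  assumes x: "x \<ge> 2" and K: "K > 0"
    and r1: "(2*x+3) * B1 = (2*x+7) * B2 + K / (2*(2*x+5)) * R'"
    and B1: "B1 > 0" "B1 > 2 * B2"
    and R: "R > 0" "R > 2 * R'"
  shows "(2*x+5) * B1 + K / (2*(2*x+3)) * R > 0"
    and "(2*x+5) * B1 + K / (2*(2*x+3)) * R > 2 * ((2*x+1) * B1)"
proof -
  define C1 where "C1 = K / (2*(2*x+5))"
  define C0 where "C0 = K / (2*(2*x+3))"
  have C1pos: "C1 > 0" unfolding C1_def using K x by simp
  have C10: "C1 < C0" unfolding C1_def C0_def using K x by (simp add: frac_less2)
  have a1: "(2*x+7) * B2 < (2*x+7) * (B1/2)" using B1 x by (intro mult_strict_left_mono) auto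
  have a2: "C1 * R' < C1 * (R/2)" using R C1pos by (intro mult_strict_left_mono) auto
  have a3: "C1 * R < C0 * R" using C10 R by (intro mult_strict_right_mono) auto
  have a4: "C0 * R > 0" using C1pos C10 R by simp
  have b0: "(2*x+3) * B1 < (2*x+7) * (B1/2) + C1 * (R/2)" using r1 a1 a2 unfolding C1_def by linarith
  have b1: "(2*x - 1) * B1 < C1 * R" using b0 by (simp add: algebra_simps)
  have b2: "(2*x - 1) * B1 < C0 * R" using b1 a3 by linarith
  have b3: "(2*x+5) * B1 > 0" using B1 x by simp
  show "(2*x+5) * B1 + K / (2*(2*x+3)) * R > 0" using b3 a4 unfolding C0_def by linarith
  have "(2*x+5) * B1 + C0 * R > (2*x+5) * B1 + (2*x-1) * B1" using b2 by linarith
  moreover have "(2*x+5) * B1 + (2*x-1) * B1 > 2 * ((2*x+1) * B1)" using B1 by (simp add: algebra_simps)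
  ultimately show "(2*x+5) * B1 + K / (2*(2*x+3)) * R > 2 * ((2*x+1) * B1)" unfolding C0_def by linarith
qed

lemma step_lemma:
  assumes m: "m \<ge> 2"
    and IH: "\<And>j. 2 \<le> j \<Longrightarrow> j \<le> m \<Longrightarrow> bb m j > 0 \<and> bb m j > 2 * bb m (Suc j)"
  shows "\<And>j. 2 \<le> j \<Longrightarrow> j \<le> Suc m \<Longrightarrow> bb (Suc m) j > 0 \<and> bb (Suc m) j > 2 * bb (Suc m) (Suc j)"
proof -
  have main: "\<forall>j. j = Suc m - d \<longrightarrow> 2 \<le> j \<longrightarrow> bb (Suc m) j > 0 \<and> bb (Suc m) j > 2 * bb (Suc m) (Suc j)" for d
  proof (induction d)
    case 0
    then show ?case using bb_diag[of "Suc m"] bb_above[of "Suc m"] by simp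
  next
    case (Suc d)
    show ?case
    proof (intro allI impI)
      fix j assume j: "j = Suc m - Suc d" "2 \<le> j"
      then have jm: "j \<le> m" by simp
      have P1: "bb (Suc m) (Suc j) > 0 \<and> bb (Suc m) (Suc j) > 2 * bb (Suc m) (Suc (Suc j))"
      proof -
        have "Suc j = Suc m - d" using j by arith
        moreover have "2 \<le> Suc j" using j by simp
        ultimately show ?thesis using Suc.IH by blast
      qed
      define K where "K = real (Suc m) * (2 * real (Suc m) - 1)"
      have Kpos: "K > 0" unfolding K_def by simp
      show "bb (Suc m) j > 0 \<and> bb (Suc m) j > 2 * bb (Suc m) (Suc j)"
      proof (cases "j = 2")
        case True
        have "(2*real 1+1) * bb (Suc m) (Suc 1) = (2*real 1+5) * bb (Suc m) (Suc (Suc 1))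
           + real (Suc m) * (2*real (Suc m) - 1) / (2*(2*real 1+3)) * bb m 1"
          by (rule bb_rec)
        then have "3 * bb (Suc m) 2 = 7 * bb (Suc m) 3" using bb_one[OF m] by (simp add: numeral_eq_Suc)
        then show ?thesis using P1 True by (simp add: numeral_eq_Suc) 
      next
        case False
        obtain i where i1: "j = Suc i" using j(2) by (cases j) auto
        have i2: "i \<ge> 2" using False j(2) i1 by simp
        note i = i1 i2
        have im: "i \<le> m" using jm i by simp
        have r0: "(2*real i+1) * bb (Suc m) (Suc i) = (2*real i+5) * bb (Suc m) (Suc (Suc i))
           + K / (2*(2*real i+3)) * bb m i"
          unfolding K_def by (rule bb_rec)
        have r1': "(2*real (Suc i)+1) * bb (Suc m) (Suc (Suc i)) = (2*real (Suc i)+5) * bb (Suc m) (Suc (Suc (Suc i)))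
           + K / (2*(2*real (Suc i)+3)) * bb m (Suc i)"
          unfolding K_def by (rule bb_rec)
        have r1: "(2*real i+3) * bb (Suc m) (Suc (Suc i)) = (2*real i+7) * bb (Suc m) (Suc (Suc (Suc i)))
           + K / (2*(2*real i+5)) * bb m (Suc i)"
          using r1' by (simp add: algebra_simps)
        have Rm: "bb m i > 0 \<and> bb m i > 2 * bb m (Suc i)" using IH i im by simp
        have xi: "real i \<ge> 2" using i by simp
        have q1: "(2*real i+5) * bb (Suc m) (Suc (Suc i)) + K / (2*(2*real i+3)) * bb m i > 0"
         and q2: "(2*real i+5) * bb (Suc m) (Suc (Suc i)) + K / (2*(2*real i+3)) * bb m i > 2 * ((2*real i+1) * bb (Suc m) (Suc (Suc i)))"
          using key_ineq[OF xi Kpos r1] P1 Rm i by auto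
        have pos: "2*real i+1 > 0" by simp
        have "(2*real i+1) * bb (Suc m) (Suc i) > 0" using q1 r0 by simp
        then have g1: "bb (Suc m) (Suc i) > 0" using pos by (simp add: zero_less_mult_iff)
        have "(2*real i+1) * bb (Suc m) (Suc i) > (2*real i+1) * (2 * bb (Suc m) (Suc (Suc i)))"
          using q2 r0 by (simp add: algebra_simps)
        then have g2: "bb (Suc m) (Suc i) > 2 * bb (Suc m) (Suc (Suc i))"
          using pos by (simp add: mult_less_cancel_left)
        show ?thesis using g1 g2 i by simp
      qed
    qed
  qed
  fix j assume "2 \<le> j" "j \<le> Suc m"
  then show "bb (Suc m) j > 0 \<and> bb (Suc m) j > 2 * bb (Suc m) (Suc j)"
    using main[of "Suc m - j"] by simp
qed


lemma all_bb: "2 \<le> n \<Longrightarrow> 2 \<le> j \<Longrightarrow> j \<le> n \<Longrightarrow> bb n j > 0 \<and> bb n j > 2 * bb n (Suc j)"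
proof (induction n arbitrary: j rule: nat_induct_at_least)
  case base
  then have "j = 2" by simp
  then show ?case using bb_diag[of 2] bb_above[of 2] by (simp add: numeral_eq_Suc)
next
  case (Suc n)
  show ?case by (rule step_lemma[OF Suc.hyps(1) Suc.IH Suc.prems(1) Suc.prems(2)])
qed

lemma tail_bb:
  assumes "2 \<le> n" "2 \<le> k" "k \<le> n"
  shows "(\<Sum>l = k + 1..n. bb n l) < bb n k"
proof -
  have main: "\<forall>k. k = n - d \<longrightarrow> 2 \<le> k \<longrightarrow> (\<Sum>l = k + 1..n. bb n l) < bb n k" for d
  proof (induction d)
    case 0
    then show ?case using bb_diag[of n] by simp
  next
    case (Suc d)
    show ?case
    proof (intro allI impI)
      fix k assume k: "k = n - Suc d" "2 \<le> k"
      have k1: "Suc k = n - d" using k by arith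
      have kn: "k + 1 \<le> n" using k by arith
      have ih: "(\<Sum>l = Suc k + 1..n. bb n l) < bb n (Suc k)"
        using Suc.IH k1 k by simp
      have "(\<Sum>l = k + 1..n. bb n l) = bb n (k+1) + (\<Sum>l = Suc k + 1..n. bb n l)"
        using kn by (simp add: sum.atLeast_Suc_atMost)
      also have "\<dots> < 2 * bb n (Suc k)" using ih by simp
      also have "\<dots> < bb n k" using all_bb[OF assms(1) k(2)] kn by simp
      finally show "(\<Sum>l = k + 1..n. bb n l) < bb n k" .
    qed
  qed
  show ?thesis using main[of "n - k"] assms by simp
qed

theorem mainTheorem7:
  shows "(\<forall>n k. 2 < n \<and> 2 \<le> k \<and> k \<le> n - 1 \<longrightarrow>
            bnk n k > 2 * bnk n (k + 1) \<and> bnk n k > (\<Sum>l = k + 1..n. bnk n l))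
       \<and> (\<forall>n k. 2 \<le> k \<and> k \<le> n \<longrightarrow> bnk n k > 0)"
proof (intro conjI allI impI)
  fix n k :: nat assume a: "2 < n \<and> 2 \<le> k \<and> k \<le> n - 1"
  then have n2: "2 \<le> n" and k2: "2 \<le> k" and kn: "k + 1 \<le> n" by auto
  have e1: "bnk n k = bb n k" using a by (intro bnk_bb) auto
  have e2: "bnk n (k+1) = bb n (k+1)" using kn by (intro bnk_bb) auto
  have e3: "(\<Sum>l = k + 1..n. bnk n l) = (\<Sum>l = k + 1..n. bb n l)"
    by (rule sum.cong) (auto intro: bnk_bb)
  show "bnk n k > 2 * bnk n (k + 1)" using all_bb[OF n2 k2] kn e1 e2 by simp
  show "bnk n k > (\<Sum>l = k + 1..n. bnk n l)" using tail_bb[OF n2 k2] kn e1 e3 by simp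
next
  fix n k :: nat assume a: "2 \<le> k \<and> k \<le> n"
  then have "bnk n k = bb n k" by (intro bnk_bb) auto
  then show "bnk n k > 0" using all_bb[of n k] a by simp
qed

end
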